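(* For $\xi,X\in\mathbb R^2$ let $$I(\xi,X)=\Big\{\theta\in[-\pi/2,\pi/2]:\ \big\langle\xi,(I+A(\theta))^{-1}A'(\theta)X\big\rangle^2\ge\theta^2|X|^2|\xi|^2/128\Big\}.$$ Then for all $\xi,X\in\mathbb R^2$, either $(0,\pi/2]\subset I(\xi,X)$ or $[-\pi/2,0)\subset I(\xi,X)$.
   Context: $A(\theta)=\frac12(R_\theta-I)=\frac12\begin{pmatrix}\cos\theta-1&-\sin\theta\\ \sin\theta&\cos\theta-1\end{pmatrix}$, where $R_\theta$ is the rotation of angle $\theta$; $A'(\theta)$ is its derivative in $\theta$, and $I$ is the $2\times2$ identity matrix. *)

theory Defs
  imports "HOL-Analysis.Analysis"
begin

definition rot :: "real \<Rightarrow> real^2^2" where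
  "rot \<theta> = vector [vector [cos \<theta>, - sin \<theta>], vector [sin \<theta>, cos \<theta>]]"

definition Amat :: "real \<Rightarrow> real^2^2" where
  "Amat \<theta> = (1/2) *\<^sub>R (rot \<theta> - mat 1)"

text \<open>A'(theta): the entrywise derivative of A in theta.\<close>
definition Amat' :: "real \<Rightarrow> real^2^2" where
  "Amat' \<theta> = (1/2) *\<^sub>R vector [vector [- sin \<theta>, - cos \<theta>], vector [cos \<theta>, - sin \<theta>]]"

definition Iset :: "real^2 \<Rightarrow> real^2 \<Rightarrow> real set" where
  "Iset \<xi> X = {\<theta> \<in> {-pi/2..pi/2}.
     (\<xi> \<bullet> ((matrix_inv (mat 1 + Amat \<theta>) ** Amat' \<theta>) *v X))\<^sup>2
       \<ge> \<theta>\<^sup>2 * (norm X)\<^sup>2 * (norm \<xi>)\<^sup>2 / 128}"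

end

theory Submission
  imports Defs
begin

lemma minv_eq:
  fixes A N :: "real^2^2"
  assumes "A ** N = mat 1" "N ** A = mat 1"
  shows "matrix_inv A = N"
proof -
  have ex: "\<exists>B::real^2^2. A ** B = mat 1 \<and> B ** A = mat 1" using assms by blast
  define B where "B = matrix_inv A"
  have "A ** B = mat 1 \<and> B ** A = mat 1" unfolding B_def matrix_inv_def by (rule someI_ex[OF ex])
  hence "B = B ** (A ** N)" using assms by (simp add: matrix_mul_rid)
  also have "\<dots> = (B ** A) ** N" by (simp add: matrix_mul_assoc)
  also have "\<dots> = N" using \<open>A ** B = mat 1 \<and> B ** A = mat 1\<close> by (simp add: matrix_mul_lid)
  finally show ?thesis unfolding B_def by simp
qed

definition Nmat :: "real \<Rightarrow> real^2^2" where
  "Nmat \<theta> = (1/(1+cos \<theta>)) *\<^sub>R vector [vector [1+cos \<theta>, sin \<theta>], vector [- sin \<theta>, 1 + cos \<theta>]]"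

lemma inv_eq:
  assumes "1 + cos \<theta> \<noteq> 0"
  shows "matrix_inv (mat 1 + Amat \<theta>) = Nmat \<theta>"
proof (rule minv_eq)
  have s: "sin \<theta> ^ 2 = 1 - cos \<theta> ^2" by (simp add: sin_squared_eq)
  show "(mat 1 + Amat \<theta>) ** Nmat \<theta> = mat 1"
    using assms
    by (simp add: vec_eq_iff forall_2 matrix_matrix_mult_def sum_2 Amat_def rot_def Nmat_def mat_def
        field_simps power2_eq_square[symmetric] s) (use sin_cos_squared_add3[of \<theta>] in algebra)
  show "Nmat \<theta> ** (mat 1 + Amat \<theta>) = mat 1"
    using assms
    by (simp add: vec_eq_iff forall_2 matrix_matrix_mult_def sum_2 Amat_def rot_def Nmat_def mat_def
        field_simps power2_eq_square[symmetric] s) (use sin_cos_squared_add3[of \<theta>] in algebra)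
qed

lemma prodNA:
  assumes "1 + cos \<theta> \<noteq> 0"
  shows "Nmat \<theta> ** Amat' \<theta> = (1/(2*(1+cos \<theta>))) *\<^sub>R vector[vector[-sin \<theta>, -(1+cos \<theta>)], vector[1+cos \<theta>, -sin \<theta>]]"
proof -
  have h: "4 + (cos \<theta> * 8 + cos \<theta> * (cos \<theta> * 4)) \<noteq> 0"
  proof -
    have "4 + (cos \<theta> * 8 + cos \<theta> * (cos \<theta> * 4)) = 4*(1+cos \<theta>)^2" by (simp add: power2_eq_square algebra_simps)
    thus ?thesis using assms by simp
  qed
  show ?thesis
  using assms h
  apply (simp add: vec_eq_iff forall_2 matrix_matrix_mult_def sum_2 Nmat_def Amat'_def)
  apply (simp add: field_simps)
  apply (use sin_cos_squared_add3[of \<theta>] in algebra)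
  done
qed

lemma dot_eq:
  assumes "1 + cos \<theta> \<noteq> 0"
  shows "\<xi> \<bullet> ((matrix_inv (mat 1 + Amat \<theta>) ** Amat' \<theta>) *v X) =
     ((1 + cos \<theta>) * (\<xi>$2*X$1 - \<xi>$1*X$2) - sin \<theta> * (\<xi>$1*X$1 + \<xi>$2*X$2)) / (2*(1+cos \<theta>))"
proof -
  have e: "matrix_inv (mat 1 + Amat \<theta>) ** Amat' \<theta> = (1/(2*(1+cos \<theta>))) *\<^sub>R vector[vector[-sin \<theta>, -(1+cos \<theta>)], vector[1+cos \<theta>, -sin \<theta>]]"
    using inv_eq[OF assms] prodNA[OF assms] by simp
  define k where "k = 1/(2*(1+cos \<theta>))"
  have "\<xi> \<bullet> ((matrix_inv (mat 1 + Amat \<theta>) ** Amat' \<theta>) *v X) = k * ((1 + cos \<theta>) * (\<xi>$2*X$1 - \<xi>$1*X$2) - sin \<theta> * (\<xi>$1*X$1 + \<xi>$2*X$2))"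
    unfolding e k_def[symmetric]
    by (simp add: inner_vec_def matrix_vector_mult_def sum_2 algebra_simps)
  thus ?thesis by (simp add: k_def)
qed

lemma nrm: "(norm (x::real^2))\<^sup>2 = (x$1)^2 + (x$2)^2"
  unfolding power2_norm_eq_inner by (simp add: inner_vec_def sum_2 power2_eq_square)

lemma sin_lb: fixes x :: real assumes "0 \<le> x" "x \<le> 1" shows "x/2 \<le> sin x"
proof -
  have b: "\<bar>sin x - (\<Sum>m<3. sin_coeff m * x ^ m)\<bar> \<le> inverse (fact 3) * \<bar>x\<bar> ^ 3"
    by (rule Maclaurin_sin_bound)
  have sm: "(\<Sum>m<3. sin_coeff m * x ^ m) = x"
    by (simp add: numeral_3_eq_3 sin_coeff_def)
  have f: "inverse (fact 3 :: real) = 1/6" by (simp add: numeral_3_eq_3)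
  have xx: "x*x \<le> 1" using assms by (intro mult_le_one) auto
  have "x*x*x \<le> 1*x" using xx assms by (intro mult_right_mono) auto
  hence "x^3 \<le> x" by (simp add: power3_eq_cube)
  hence "x ^ 3 \<le> x" .
  moreover have ax: "\<bar>x\<bar> = x" using assms by simp
  ultimately have "\<bar>sin x - x\<bar> \<le> x/6" using b sm f by simp
  hence "x - sin x \<le> x/6" by (metis abs_minus_commute abs_le_D1)
  thus ?thesis using assms by linarith
qed

lemma sin_sq_lb: fixes x :: real assumes "\<bar>x\<bar> \<le> 1" shows "x\<^sup>2/4 \<le> (sin x)\<^sup>2"
proof (cases "0 \<le> x")
  case True
  with assms sin_lb[of x] have "x/2 \<le> sin x" by auto
  moreover have "0 \<le> x/2" using True by simp
  ultimately have "(x/2)^2 \<le> (sin x)^2" by (rule power_mono)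
  thus ?thesis by (simp add: power_divide)
next
  case False
  with assms sin_lb[of "-x"] have "-x/2 \<le> sin (-x)" by auto
  moreover have "0 \<le> -x/2" using False by simp
  ultimately have "(-x/2)^2 \<le> (sin (-x))^2" by (rule power_mono)
  thus ?thesis by (simp add: power_divide)
qed

lemma key:
  fixes \<theta> u v :: real
  assumes th: "-pi/2 \<le> \<theta>" "\<theta> \<le> pi/2" and suv: "sin (\<theta>/2) * u * v \<le> 0"
  shows "\<theta>^2*(u^2+v^2)/128 \<le> (((1+cos \<theta>)*u - sin \<theta>* v)/(2*(1+cos \<theta>)))^2"
proof -
  define t where "t = \<theta>/2"
  define c where "c = cos t"
  define s where "s = sin t"
  have tt: "\<theta> = 2*t" unfolding t_def by simp
  have cs1: "c^2 + s^2 = 1" unfolding c_def s_def by simp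
  have cpos: "0 < c" unfolding c_def proof (rule cos_gt_zero_pi) show "- (pi/2) < t" using th pi_gt_zero unfolding t_def by linarith show "t < pi/2" using th pi_gt_zero unfolding t_def by linarith qed
  have C: "cos \<theta> = c^2 - s^2" unfolding tt c_def s_def by (rule cos_double)
  have S: "sin \<theta> = 2* s*c" unfolding tt c_def s_def by (rule sin_double)
  have cge: "0 \<le> cos \<theta>" using th by (intro cos_ge_zero) auto
  hence sc: "s^2 \<le> c^2" using C by simp
  have c1: "c^2 \<le> 1" using cs1 by (smt (verit) zero_le_power2)
  have tabs: "\<bar>t\<bar> \<le> 1" using th pi_less_4 unfolding t_def by auto
  have slb: "t^2/4 \<le> s^2" unfolding s_def using sin_sq_lb[OF tabs] .
  have suv': "s*u* v \<le> 0" using suv unfolding s_def t_def .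
  have e: "((1+cos \<theta>)*u - sin \<theta>* v)/(2*(1+cos \<theta>)) = (c*u - s* v)/(2*c)"
  proof -
    have "1 + cos \<theta> = 2*c^2" using C cs1 by simp
    thus ?thesis using S cpos by (simp add: field_simps power2_eq_square)
  qed
  have q: "s^2*(u^2+v^2) \<le> (c*u - s* v)^2"
  proof -
    have "(c*u - s* v)^2 = c^2*u^2 + s^2* v^2 - 2*c*(s*u* v)" by (simp add: power2_eq_square algebra_simps)
    moreover have "0 \<le> - 2*c*(s*u* v)" using cpos suv' by (simp add: mult_nonneg_nonpos)
    moreover have "s^2*u^2 \<le> c^2*u^2" using sc by (simp add: mult_right_mono)
    ultimately show ?thesis by (simp add: algebra_simps)
  qed
  have "((c*u - s* v)/(2*c))^2 = (c*u - s* v)^2/(4*c^2)" by (simp add: power_divide power_mult_distrib)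
  also have "\<dots> \<ge> (c*u - s* v)^2/4"
    using c1 cpos by (intro divide_left_mono) auto
  finally have r1: "(c*u - s* v)^2/4 \<le> ((c*u - s* v)/(2*c))^2" .
  have uv: "0 \<le> u^2+v^2" by simp
  have "\<theta>\<^sup>2*(u\<^sup>2+v\<^sup>2)/128 = (t^2/4)*(u^2+v^2)/8" unfolding tt by (simp add: power_mult_distrib)
  also have "\<dots> \<le> s^2*(u^2+v^2)/8" using slb uv by (intro divide_right_mono mult_right_mono) auto
  also have "\<dots> \<le> (c*u - s* v)^2/8" using q by simp
  also have "\<dots> \<le> (c*u - s* v)^2/4" by simp
  also have "\<dots> \<le> ((c*u - s* v)/(2*c))^2" by (rule r1)
  finally show ?thesis unfolding e .
qed

lemma member_I:
  fixes \<xi> X :: "real^2"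
  assumes th: "-pi/2 \<le> \<theta>" "\<theta> \<le> pi/2"
    and suv: "sin (\<theta>/2) * (\<xi>$2*X$1 - \<xi>$1*X$2) * (\<xi>$1*X$1 + \<xi>$2*X$2) \<le> 0"
  shows "\<theta> \<in> Iset \<xi> X"
proof -
  have cge: "0 \<le> cos \<theta>" using th by (intro cos_ge_zero) auto
  hence ne: "1 + cos \<theta> \<noteq> 0" by simp
  have n: "(norm X)\<^sup>2 * (norm \<xi>)\<^sup>2 = (\<xi>$2*X$1 - \<xi>$1*X$2)^2 + (\<xi>$1*X$1 + \<xi>$2*X$2)^2"
    unfolding nrm by (simp add: power2_eq_square algebra_simps)
  show ?thesis unfolding Iset_def
    using th dot_eq[OF ne, of \<xi> X] key[OF th suv] n by (simp add: mult.assoc)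
qed

theorem lemma4p7:
  fixes \<xi> X :: "real^2"
  shows "{0<..pi/2} \<subseteq> Iset \<xi> X \<or> {-pi/2..<0} \<subseteq> Iset \<xi> X"
proof -
  define u where "u = \<xi>$2*X$1 - \<xi>$1*X$2"
  define v where "v = \<xi>$1*X$1 + \<xi>$2*X$2"
  show ?thesis
  proof (cases "u * v \<le> 0")
    case True
    have "\<theta> \<in> Iset \<xi> X" if "\<theta> \<in> {0<..pi/2}" for \<theta>
    proof (rule member_I)
      show "-pi/2 \<le> \<theta>" "\<theta> \<le> pi/2" using that pi_gt_zero by auto
      have "0 < sin (\<theta>/2)" using that pi_gt_zero by (intro sin_gt_zero) auto
      thus "sin (\<theta>/2) * (\<xi>$2*X$1 - \<xi>$1*X$2) * (\<xi>$1*X$1 + \<xi>$2*X$2) \<le> 0" using True unfolding u_def v_def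
        by (simp add: mult.assoc mult_nonneg_nonpos)
    qed
    thus ?thesis by blast
  next
    case False
    have "\<theta> \<in> Iset \<xi> X" if "\<theta> \<in> {-pi/2..<0}" for \<theta>
    proof (rule member_I)
      show "-pi/2 \<le> \<theta>" "\<theta> \<le> pi/2" using that pi_gt_zero by auto
      have "0 < sin (-\<theta>/2)" using that pi_gt_zero by (intro sin_gt_zero) auto
      hence "sin (\<theta>/2) < 0" by simp
      moreover have "0 < u * v" using False by simp
      ultimately have "sin (\<theta>/2) * (u * v) < 0" by (rule mult_neg_pos)
      thus "sin (\<theta>/2) * (\<xi>$2*X$1 - \<xi>$1*X$2) * (\<xi>$1*X$1 + \<xi>$2*X$2) \<le> 0" unfolding u_def v_def
        by (simp add: mult.assoc)
    qed
    thus ?thesis by blast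
  qed
qed

end
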